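(* Given a privacy parameter $p\in[0,1]$, define $q=\max(p,1-p)$. Then (i) the consistent normal form of $\{\mathrm{RR}_p\}$ equals the consistent normal form of $\{\mathrm{RR}_q\}$; and (ii) if $p=1/2$, the consistent normal form of $\{\mathrm{RR}_p\}$ consists exactly of the algorithms $\mathcal{M}$ whose outputs are statistically independent of their inputs, i.e. $P[\mathcal{M}(D_i)=\omega]=P[\mathcal{M}(D_j)=\omega]$ for all datasets $D_i,D_j$ in the input domain and all $\omega$ in the range of $\mathcal{M}$ (so attackers learn nothing from those outputs).
   Context: A privacy definition is a set of (possibly randomized) algorithms with a common input domain. The consistent normal form of a privacy definition $\mathcal{P}$ is the smallest set of algorithms containing $\mathcal{P}$ that is closed under (a) post-processing: if $\mathcal{M}$ is in the set and $\mathcal{A}$ is any algorithm whose domain contains the range of $\mathcal{M}$ and whose random bits are independent of those of $\mathcal{M}$, then $\mathcal{A}\circ\mathcal{M}$ is in the set; and (b) convexity: if $\mathcal{M}_1,\mathcal{M}_2$ are in the set, then the algorithm running $\mathcal{M}_1$ with probability $p$ and $\mathcal{M}_2$ with probability $1-p$ is in the set. Algorithms with identical output distributions on every input are considered equivalent. The input domain is the set of all bit strings of length $k$ (tables with $k$ tuples and one binary attribute), and $\mathrm{RR}_p$ (randomized response with parameter $p$) is the algorithm that, on input $D$, independently flips each bit of $D$ with probability $1-p$. *)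

theory Defs
  imports "HOL-Probability.Probability"
begin

text \<open>Input domain: tables with k tuples and one binary attribute, i.e. bit strings of length k.\<close>
definition in_dom :: "nat \<Rightarrow> bool list set" where
  "in_dom k = {D. length D = k}"

fun RR :: "real \<Rightarrow> bool list \<Rightarrow> bool list pmf" where
  "RR p [] = return_pmf []"
| "RR p (x # xs) =
     bind_pmf (bernoulli_pmf p) (\<lambda>b. bind_pmf (RR p xs) (\<lambda>ys. return_pmf ((if b then x else \<not> x) # ys)))"

inductive_set cnf :: "nat \<Rightarrow> (bool list \<Rightarrow> 'b pmf) set \<Rightarrow> (bool list \<Rightarrow> 'b pmf) set"
  for k :: nat and P :: "(bool list \<Rightarrow> 'b pmf) set" where
  base: "M \<in> P \<Longrightarrow> M \<in> cnf k P"
| post: "M \<in> cnf k P \<Longrightarrow> (\<lambda>D. bind_pmf (M D) A) \<in> cnf k P"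
| conv: "M1 \<in> cnf k P \<Longrightarrow> M2 \<in> cnf k P \<Longrightarrow> 0 \<le> r \<Longrightarrow> r \<le> 1 \<Longrightarrow>
         (\<lambda>D. bind_pmf (bernoulli_pmf r) (\<lambda>c. if c then M1 D else M2 D)) \<in> cnf k P"
| equiv: "M \<in> cnf k P \<Longrightarrow> (\<forall>D\<in>in_dom k. M' D = M D) \<Longrightarrow> M' \<in> cnf k P"

end

theory Submission
  imports Defs
begin

lemma bern_not:
  assumes "0 \<le> p" "p \<le> 1"
  shows "map_pmf Not (bernoulli_pmf p) = bernoulli_pmf (1 - p)"
proof (rule pmf_eqI)
  fix x :: bool
  have "pmf (map_pmf Not (bernoulli_pmf p)) (Not (Not x)) = pmf (bernoulli_pmf p) (Not x)"
    by (rule pmf_map_inj') (simp add: inj_def)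
  then show "pmf (map_pmf Not (bernoulli_pmf p)) x = pmf (bernoulli_pmf (1 - p)) x"
    using assms by (cases x) auto
qed

lemma if_not_aux: "(\<not> (if \<not> b then x else \<not> x)) = (if b then x else \<not> x)"
  by auto

lemma if_TF_aux: "(if b then True else \<not> True) = b" "(if b then False else \<not> False) = (\<not> b)"
  by auto

lemma RR_flip:
  assumes "0 \<le> p" "p \<le> 1"
  shows "RR p D = map_pmf (map Not) (RR (1 - p) D)"
proof (induction D)
  case Nil
  then show ?case by simp
next
  case (Cons x xs)
  have "RR (1 - p) (x # xs) = bind_pmf (map_pmf Not (bernoulli_pmf p))
     (\<lambda>b. bind_pmf (RR (1 - p) xs) (\<lambda>ys. return_pmf ((if b then x else \<not> x) # ys)))"
    using bern_not[OF assms] by simp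
  then show ?case using Cons
    by (simp add: map_pmf_def bind_map_pmf bind_assoc_pmf bind_return_pmf if_not_aux)
qed

lemma RR_half_indep:
  "length D = length D' \<Longrightarrow> RR (1/2) D = RR (1/2) D'"
proof (induction D arbitrary: D')
  case Nil
  then show ?case by simp
next
  case (Cons x xs)
  then obtain y ys where D': "D' = y # ys" and l: "length xs = length ys" by (cases D') auto
  have ih: "RR (1/2) xs = RR (1/2) ys" using Cons.IH l by simp
  define f where "f = (\<lambda>c. bind_pmf (RR (1/2) ys) (\<lambda>zs. return_pmf (c # zs)))"
  have B: "map_pmf Not (bernoulli_pmf (1/2)) = bernoulli_pmf (1/2)"
    using bern_not[of "1/2"] by simp
  have gen: "RR (1/2) (z # ys) = bind_pmf (bernoulli_pmf (1/2)) f" for z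
  proof (cases z)
    case True
    then show ?thesis by (simp add: f_def if_TF_aux)
  next
    case False
    have "RR (1/2) (z # ys) = bind_pmf (map_pmf Not (bernoulli_pmf (1/2))) f"
      using False by (simp add: f_def bind_map_pmf if_TF_aux)
    then show ?thesis using B by simp
  qed
  have "RR (1/2) (x # xs) = RR (1/2) (x # ys)" using ih by simp
  then show ?case using gen D' by simp
qed

lemma cnf_mono:
  assumes "P \<subseteq> cnf k Q"
  shows "cnf k P \<subseteq> cnf k Q"
proof
  fix M assume "M \<in> cnf k P"
  then show "M \<in> cnf k Q"
    by (induction rule: cnf.induct) (use assms in \<open>auto intro: cnf.intros\<close>)
qed

lemma swap_in:
  assumes "inj enc" and eq: "\<And>D. R1 D = map_pmf (map Not) (R2 D)"
  shows "(\<lambda>D. map_pmf enc (R1 D)) \<in> cnf k {(\<lambda>D. map_pmf enc (R2 D))}"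
proof -
  have b: "(\<lambda>D. map_pmf enc (R2 D)) \<in> cnf k {(\<lambda>D. map_pmf enc (R2 D))}" by (rule cnf.base) simp
  have "(\<lambda>D. bind_pmf (map_pmf enc (R2 D)) (\<lambda>y. return_pmf (enc (map Not (inv enc y)))))
      \<in> cnf k {(\<lambda>D. map_pmf enc (R2 D))}" by (rule cnf.post[OF b])
  moreover have "(\<lambda>D. bind_pmf (map_pmf enc (R2 D)) (\<lambda>y. return_pmf (enc (map Not (inv enc y)))))
     = (\<lambda>D. map_pmf enc (R1 D))"
  proof
    fix D
    have "bind_pmf (map_pmf enc (R2 D)) (\<lambda>y. return_pmf (enc (map Not (inv enc y))))
        = bind_pmf (R2 D) (\<lambda>y. return_pmf (enc (map Not y)))"
      using assms(1) by (simp add: bind_map_pmf o_def)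
    also have "\<dots> = map_pmf (enc \<circ> map Not) (R2 D)" by (simp add: map_pmf_def o_def)
    also have "\<dots> = map_pmf enc (R1 D)" by (simp add: eq pmf.map_comp)
    finally show "bind_pmf (map_pmf enc (R2 D)) (\<lambda>y. return_pmf (enc (map Not (inv enc y)))) = map_pmf enc (R1 D)" .
  qed
  ultimately show ?thesis by simp
qed

lemma cnf_const:
  assumes "M \<in> cnf k {(\<lambda>D. map_pmf enc (RR (1/2) D))}" "Di \<in> in_dom k" "Dj \<in> in_dom k"
  shows "M Di = M Dj"
  using assms(1)
proof (induction rule: cnf.induct)
  case (base M)
  then show ?case using assms(2,3) RR_half_indep[of Di Dj] by (auto simp: in_dom_def)
next
  case (post M A) then show ?case by simp
next
  case (conv M1 M2 r) then show ?case by metis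
next
  case (equiv M M') then show ?case using assms(2,3) by simp
qed

theorem lemma1:
  fixes p :: real and k :: nat and enc :: "bool list \<Rightarrow> 'b"
  assumes "0 \<le> p" and "p \<le> 1" and "inj enc"
  defines "q \<equiv> max p (1 - p)"
  shows "cnf k {(\<lambda>D. map_pmf enc (RR p D))} = cnf k {(\<lambda>D. map_pmf enc (RR q D))}
     \<and> (p = 1/2 \<longrightarrow> cnf k {(\<lambda>D. map_pmf enc (RR p D))} =
           {M. \<forall>Di\<in>in_dom k. \<forall>Dj\<in>in_dom k. \<forall>\<omega>. pmf (M Di) \<omega> = pmf (M Dj) \<omega>})"
proof (intro conjI impI)
  show "cnf k {(\<lambda>D. map_pmf enc (RR p D))} = cnf k {(\<lambda>D. map_pmf enc (RR q D))}"
  proof (cases "1 - p \<le> p")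
    case True
    then show ?thesis by (simp add: q_def)
  next
    case False
    then have q: "q = 1 - p" by (simp add: q_def)
    have e1: "RR p D = map_pmf (map Not) (RR q D)" for D
      unfolding q by (rule RR_flip[OF assms(1,2)])
    have e2: "RR q D = map_pmf (map Not) (RR p D)" for D
    proof -
      have h: "map_pmf (map Not) (RR p D) = map_pmf (map Not) (map_pmf (map Not) (RR q D))"
        by (simp only: e1)
      show ?thesis unfolding h by (simp add: pmf.map_comp o_def)
    qed
    have s1: "(\<lambda>D. map_pmf enc (RR p D)) \<in> cnf k {(\<lambda>D. map_pmf enc (RR q D))}"
      by (rule swap_in[OF assms(3) e1])
    have s2: "(\<lambda>D. map_pmf enc (RR q D)) \<in> cnf k {(\<lambda>D. map_pmf enc (RR p D))}"
      by (rule swap_in[OF assms(3) e2])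
    show ?thesis
    proof (rule equalityI)
      show "cnf k {(\<lambda>D. map_pmf enc (RR p D))} \<subseteq> cnf k {(\<lambda>D. map_pmf enc (RR q D))}"
        by (rule cnf_mono) (use s1 in blast)
      show "cnf k {(\<lambda>D. map_pmf enc (RR q D))} \<subseteq> cnf k {(\<lambda>D. map_pmf enc (RR p D))}"
        by (rule cnf_mono) (use s2 in blast)
    qed
  qed
next
  assume p: "p = 1/2"
  show "cnf k {(\<lambda>D. map_pmf enc (RR p D))} =
           {M. \<forall>Di\<in>in_dom k. \<forall>Dj\<in>in_dom k. \<forall>\<omega>. pmf (M Di) \<omega> = pmf (M Dj) \<omega>}"
  proof (intro equalityI subsetI)
    fix M assume "M \<in> cnf k {(\<lambda>D. map_pmf enc (RR p D))}"
    then show "M \<in> {M. \<forall>Di\<in>in_dom k. \<forall>Dj\<in>in_dom k. \<forall>\<omega>. pmf (M Di) \<omega> = pmf (M Dj) \<omega>}"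
      using cnf_const[of M k enc] p by (simp only: mem_Collect_eq) metis
  next
    fix M :: "bool list \<Rightarrow> 'b pmf" assume "M \<in> {M. \<forall>Di\<in>in_dom k. \<forall>Dj\<in>in_dom k. \<forall>\<omega>. pmf (M Di) \<omega> = pmf (M Dj) \<omega>}"
    then have c0: "\<forall>Di\<in>in_dom k. \<forall>Dj\<in>in_dom k. \<forall>\<omega>. pmf (M Di) \<omega> = pmf (M Dj) \<omega>"
      by (simp only: mem_Collect_eq)
    have c: "\<And>Di Dj. Di \<in> in_dom k \<Longrightarrow> Dj \<in> in_dom k \<Longrightarrow> M Di = M Dj"
      using c0 by (intro pmf_eqI) blast
    define D0 where "D0 = replicate k True"
    have D0: "D0 \<in> in_dom k" by (simp add: D0_def in_dom_def)
    have b: "(\<lambda>D. map_pmf enc (RR p D)) \<in> cnf k {(\<lambda>D. map_pmf enc (RR p D))}" by (rule cnf.base) simp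
    have "(\<lambda>D. bind_pmf (map_pmf enc (RR p D)) (\<lambda>_. M D0)) \<in> cnf k {(\<lambda>D. map_pmf enc (RR p D))}"
      by (rule cnf.post[OF b])
    moreover have "\<forall>D\<in>in_dom k. M D = bind_pmf (map_pmf enc (RR p D)) (\<lambda>_. M D0)"
      using c[OF _ D0] by (simp only: bind_pmf_const) blast
    ultimately show "M \<in> cnf k {(\<lambda>D. map_pmf enc (RR p D))}" by (rule cnf.equiv)
  qed
qed

end
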